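(* Let $X\in\mathscr K$ and $W\in L^2(\Omega)$. Let $M$ be the right-continuous generalized inverse of $X$ and let $\mathcal W$ be any primitive of $W$ on $[0,1]$ (i.e. $\mathcal W'=W$). Then $$\operatorname{Proj}_{\mathscr H_X}W=\mathcal W'_M(X)\quad\text{a.e. on }\Omega,$$ where $\mathcal W'_M$ is the Radon–Nikodym derivative of $\partial_x\mathcal W(M(x))$ with respect to $\partial_xM(x)$.
   Context: $\Omega=(0,1)$ with Lebesgue measure. $\mathscr K=\{X\in L^2(\Omega):X\text{ nondecreasing}\}$, with right-continuous representatives. The right-continuous generalized inverse of $X\in\mathscr K$ is $M(x)=|\{m\in\Omega:X(m)\le x\}|$, the cumulative distribution function of the push-forward of Lebesgue measure on $\Omega$ under $X$ (equivalently $X(m)=\inf\{x:M(x)>m\}$). $\Omega_X=\{m\in\Omega: X\text{ is constant in a neighborhood of }m\}$, an open set, a countable disjoint union of maximal open intervals. $\mathscr H_X=\{U\in L^2(\Omega):U\text{ is constant on each interval }(m_l,m_r)\subset\Omega_X\}$, and $\operatorname{Proj}_{\mathscr H_X}$ is the $L^2$-orthogonal projection onto it: $\operatorname{Proj}_{\mathscr H_X}U=U$ a.e. on $\Omega\setminus\Omega_X$ and equals $\frac1{m_r-m_l}\int_{m_l}^{m_r}U$ on each maximal interval $(m_l,m_r)$ of $\Omega_X$. *)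

theory Defs
  imports "HOL-Analysis.Analysis"
begin

definition gen_inv :: "(real \<Rightarrow> real) \<Rightarrow> real \<Rightarrow> real" where
  "gen_inv X x = measure lborel {m \<in> {0<..<1}. X m \<le> x}"

definition OmegaX :: "(real \<Rightarrow> real) \<Rightarrow> real set" where
  "OmegaX X = {m \<in> {0<..<1}. \<exists>e>0. \<forall>m' \<in> ball m e. X m' = X m}"

text \<open>L2-orthogonal projection onto H_X: the average of U over the maximal
  interval (connected component) of Omega_X containing m, and U itself outside Omega_X.\<close>
definition proj_HX :: "(real \<Rightarrow> real) \<Rightarrow> (real \<Rightarrow> real) \<Rightarrow> real \<Rightarrow> real" where
  "proj_HX X U m =
     (if m \<in> OmegaX X
      then (LINT t : connected_component_set (OmegaX X) m | lborel. U t)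
             / measure lborel (connected_component_set (OmegaX X) m)
      else U m)"

text \<open>g is the Radon-Nikodym derivative of the (signed) Lebesgue-Stieltjes
  measure dF with respect to the Lebesgue-Stieltjes measure dM: g is dM-integrable
  and its dM-integral over every interval (a,b] equals F b - F a
  (the signed measure dF is determined by its values on such intervals).\<close>
definition is_LS_RN_deriv :: "(real \<Rightarrow> real) \<Rightarrow> (real \<Rightarrow> real) \<Rightarrow> (real \<Rightarrow> real) \<Rightarrow> bool" where
  "is_LS_RN_deriv F M g \<longleftrightarrow>
     g \<in> borel_measurable borel \<and>
     integrable (interval_measure M) g \<and>
     (\<forall>a b. a \<le> b \<longrightarrow>
        (LINT x : {a<..b} | interval_measure M. g x) = F b - F a)"

end

theory Submission
  imports Defs "HOL-Probability.Distribution_Functions"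
begin


lemma enn_fin_eq: "(a::ennreal) < \<infinity> \<Longrightarrow> b < \<infinity> \<Longrightarrow> enn2real a = enn2real b \<Longrightarrow> a = b"
proof -
  assume a: "a < \<infinity>" and b: "b < \<infinity>" and e: "enn2real a = enn2real b"
  have "a = ennreal (enn2real a)" using a by simp
  also have "\<dots> = ennreal (enn2real b)" using e by simp
  also have "\<dots> = b" using b by simp
  finally show ?thesis .
qed

lemma int0_iff:
  fixes F :: "'a \<Rightarrow> real"
  assumes "integrable N F"
  shows "integral\<^sup>L N F = 0 \<longleftrightarrow> (\<integral>\<^sup>+ x. ennreal (F x) \<partial>N) = (\<integral>\<^sup>+ x. ennreal (- F x) \<partial>N)"
proof -
  have fin: "(\<integral>\<^sup>+ x. ennreal (G x) \<partial>N) < \<infinity>" if "integrable N G" for G :: "'a \<Rightarrow> real"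
    using integrableD(2)[OF that] by (simp add: less_top)
  have f1: "(\<integral>\<^sup>+ x. ennreal (F x) \<partial>N) < \<infinity>" using fin[OF assms] .
  have f2: "(\<integral>\<^sup>+ x. ennreal (- F x) \<partial>N) < \<infinity>" using fin[of "\<lambda>x. - F x"] assms by simp
  show ?thesis unfolding real_lebesgue_integral_def[OF assms]
    using enn_fin_eq[OF f1 f2] by auto
qed



lemma emeasure_distr_density:
  fixes f :: "'a \<Rightarrow> real" and h :: "'a \<Rightarrow> real"
  assumes [measurable]: "f \<in> borel_measurable N" "h \<in> borel_measurable N" "B \<in> sets borel"
  shows "emeasure (distr (density N (\<lambda>x. ennreal (f x))) borel h) B = (\<integral>\<^sup>+ x. ennreal (f x) * indicator B (h x) \<partial>N)"
proof -
  have "emeasure (distr (density N (\<lambda>x. ennreal (f x))) borel h) B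
      = emeasure (density N (\<lambda>x. ennreal (f x))) (h -` B \<inter> space N)"
    by (subst emeasure_distr) auto
  also have "\<dots> = (\<integral>\<^sup>+ x. ennreal (f x) * indicator (h -` B \<inter> space N) x \<partial>N)"
    by (rule emeasure_density) auto
  also have "\<dots> = (\<integral>\<^sup>+ x. ennreal (f x) * indicator B (h x) \<partial>N)"
    by (intro nn_integral_cong) (auto simp: indicator_def)
  finally show ?thesis .
qed

lemma Ioc_zero_all:
  fixes N :: "'a measure" and h :: "'a \<Rightarrow> real" and f :: "'a \<Rightarrow> real"
  assumes fm: "finite_measure N" and fi: "integrable N f" and hm[measurable]: "h \<in> borel_measurable N"
    and Z: "\<And>a b. a \<le> b \<Longrightarrow> integral\<^sup>L N (\<lambda>x. indicator {a<..b} (h x) * f x) = 0"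
    and A: "A \<in> sets borel"
  shows "integral\<^sup>L N (\<lambda>x. indicator A (h x) * f x) = 0"
proof -
  interpret finite_measure N by fact
  have fm[measurable]: "f \<in> borel_measurable N" using fi by auto
  define \<alpha> where "\<alpha> = distr (density N (\<lambda>x. ennreal (f x))) borel h"
  define \<beta> where "\<beta> = distr (density N (\<lambda>x. ennreal (- f x))) borel h"
  have ea: "emeasure \<alpha> B = (\<integral>\<^sup>+ x. ennreal (f x) * indicator B (h x) \<partial>N)" if "B \<in> sets borel" for B
    unfolding \<alpha>_def by (rule emeasure_distr_density) (use that in auto)
  have eb: "emeasure \<beta> B = (\<integral>\<^sup>+ x. ennreal (- f x) * indicator B (h x) \<partial>N)" if "B \<in> sets borel" for B
    unfolding \<beta>_def by (rule emeasure_distr_density) (use that in auto)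
  have key: "integral\<^sup>L N (\<lambda>x. indicator B (h x) * f x) = 0 \<longleftrightarrow> emeasure \<alpha> B = emeasure \<beta> B"
    if B: "B \<in> sets borel" for B
  proof -
    have "integrable N (\<lambda>x. indicator B (h x) * f x)"
      using integrable_real_mult_indicator[of "h -` B \<inter> space N" N f] fi B
      by (auto simp: indicator_def intro: Bochner_Integration.integrable_cong[THEN iffD1, rotated -1])
    note int0_iff[OF this]
    moreover have "(\<lambda>x. ennreal (indicator B (h x) * f x)) = (\<lambda>x. ennreal (f x) * indicator B (h x))"
      by (auto simp: indicator_def)
    moreover have "(\<lambda>x. ennreal (- (indicator B (h x) * f x))) = (\<lambda>x. ennreal (- f x) * indicator B (h x))"
      by (auto simp: indicator_def)
    ultimately show ?thesis using ea[OF B] eb[OF B] by simp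
  qed
  have fin: "emeasure \<alpha> B < \<infinity>" if "B \<in> sets borel" for B
  proof -
    have "emeasure \<alpha> B \<le> (\<integral>\<^sup>+ x. ennreal (norm (f x)) \<partial>N)"
      unfolding ea[OF that] by (intro nn_integral_mono) (auto simp: indicator_def intro: ennreal_leI)
    also have "\<dots> < \<infinity>" using fi by (simp add: integrable_iff_bounded)
    finally show ?thesis .
  qed
  have "\<alpha> = \<beta>"
  proof (rule measure_eqI_generator_eq[where \<Omega>=UNIV and E="range (\<lambda>(a, b). {a<..b::real})" and A="\<lambda>i. {- real (i::nat)<..real i}"])
    fix X assume "X \<in> range (\<lambda>(a, b). {a<..b::real})"
    then obtain a b where Xeq: "X = {a<..b}" by auto
    show "emeasure \<alpha> X = emeasure \<beta> X"
    proof (cases "a \<le> b")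
      case True then show ?thesis using key[of "{a<..b}"] Z[OF True] Xeq by simp
    next
      case False then have "X = {}" using Xeq by auto
      then show ?thesis by simp
    qed
  next
    show "(\<Union>i. {- real (i::nat)<..real i}) = UNIV" by (rule UN_Ioc_eq_UNIV)
  next
    fix i show "emeasure \<alpha> {- real (i::nat)<..real i} \<noteq> \<infinity>" using fin[of "{- real i<..real i}"] by simp
  qed (auto simp: \<alpha>_def \<beta>_def borel_sigma_sets_Ioc Int_stable_def)
  then show ?thesis using key[OF A] by simp
qed


lemma RN_pos:
  fixes N :: "'a measure" and h :: "'a \<Rightarrow> real" and f :: "'a \<Rightarrow> real"
  assumes fm: "finite_measure N" and fi: "integrable N f" and hm[measurable]: "h \<in> borel_measurable N"
    and nn: "\<And>x. 0 \<le> f x"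
  shows "\<exists>G. G \<in> borel_measurable borel \<and> integrable (distr N borel h) G \<and>
    (\<forall>B\<in>sets borel. integral\<^sup>L N (\<lambda>x. indicator B (h x) * G (h x)) = integral\<^sup>L N (\<lambda>x. indicator B (h x) * f x))"
proof -
  interpret finite_measure N by fact
  have fmeas[measurable]: "f \<in> borel_measurable N" using fi by auto
  define M' where "M' = distr N borel h"
  interpret M': finite_measure M' unfolding M'_def by (rule finite_measure_distr) simp
  define \<rho> where "\<rho> = distr (density N (\<lambda>x. ennreal (f x))) borel h"
  have erho: "emeasure \<rho> B = (\<integral>\<^sup>+ x. ennreal (f x) * indicator B (h x) \<partial>N)" if "B \<in> sets borel" for B
    unfolding \<rho>_def by (rule emeasure_distr_density) (use that in auto)
  have ac: "absolutely_continuous M' \<rho>"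
    unfolding absolutely_continuous_def
  proof
    fix B assume "B \<in> null_sets M'"
    then have B: "B \<in> sets borel" and "emeasure N (h -` B \<inter> space N) = 0"
      by (auto simp: M'_def null_sets_def emeasure_distr)
    then have nul: "h -` B \<inter> space N \<in> null_sets N" using B by (simp add: null_sets_def)
    have "AE x in N. ennreal (f x) * indicator B (h x) = 0"
    proof (rule AE_I'[OF nul])
      show "{x \<in> space N. \<not> ennreal (f x) * indicator B (h x) = 0} \<subseteq> h -` B \<inter> space N"
        by (auto simp: indicator_def split: if_splits)
    qed
    then have "(\<integral>\<^sup>+ x. ennreal (f x) * indicator B (h x) \<partial>N) = (\<integral>\<^sup>+ x. 0 \<partial>N)"
      by (rule nn_integral_cong_AE)
    then have "emeasure \<rho> B = 0" unfolding erho[OF B] by simp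
    then show "B \<in> null_sets \<rho>" using B by (auto simp: \<rho>_def null_sets_def)
  qed
  define R where "R = RN_deriv M' \<rho>"
  have R[measurable]: "R \<in> borel_measurable borel"
  proof -
    have "sets M' = sets borel" by (simp add: M'_def)
    then show ?thesis using borel_measurable_RN_deriv[of M' \<rho>] measurable_cong_sets[OF _ refl]
      unfolding R_def by metis
  qed
  have dens: "density M' R = \<rho>"
    unfolding R_def by (rule M'.density_RN_deriv[OF ac]) (simp add: \<rho>_def M'_def)
  have eR: "(\<integral>\<^sup>+ x. R x * indicator B x \<partial>M') = (\<integral>\<^sup>+ x. ennreal (f x) * indicator B (h x) \<partial>N)"
    if B: "B \<in> sets borel" for B
  proof -
    have "(\<integral>\<^sup>+ x. R x * indicator B x \<partial>M') = emeasure (density M' R) B"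
      by (rule emeasure_density[symmetric]) (use B in \<open>auto simp: M'_def\<close>)
    then show ?thesis using erho[OF B] dens by simp
  qed
  have finN: "(\<integral>\<^sup>+ x. ennreal (f x) * indicator B (h x) \<partial>N) < \<infinity>" for B
  proof -
    have "(\<integral>\<^sup>+ x. ennreal (f x) * indicator B (h x) \<partial>N) \<le> (\<integral>\<^sup>+ x. ennreal (f x) \<partial>N)"
      by (intro nn_integral_mono) (auto simp: indicator_def)
    also have "\<dots> < \<infinity>" using integrableD(2)[OF fi] by (simp add: less_top)
    finally show ?thesis .
  qed
  have "(\<integral>\<^sup>+ x. R x \<partial>M') < \<infinity>" using eR[of UNIV] finN[of UNIV] by simp
  then have Rfin: "AE x in M'. R x \<noteq> \<infinity>"
    by (intro nn_integral_noteq_infinite) (auto simp: R_def)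
  define G where "G x = enn2real (R x)" for x
  have G[measurable]: "G \<in> borel_measurable borel" unfolding G_def by measurable
  have eG: "(\<integral>\<^sup>+ x. ennreal (indicator B x * G x) \<partial>M') = (\<integral>\<^sup>+ x. R x * indicator B x \<partial>M')" for B
  proof -
    have "AE x in M'. ennreal (indicator B x * G x) = R x * indicator B x"
      using Rfin by eventually_elim (auto simp: G_def indicator_def less_top)
    then show ?thesis by (rule nn_integral_cong_AE)
  qed
  have Gi: "integrable M' G"
  proof (rule integrableI_nonneg)
    show "G \<in> borel_measurable M'" by (simp add: M'_def)
    show "AE x in M'. 0 \<le> G x" by (simp add: G_def)
    show "(\<integral>\<^sup>+ x. ennreal (G x) \<partial>M') < \<infinity>" using eG[of UNIV] eR[of UNIV] finN[of UNIV] by simp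
  qed
  show ?thesis
  proof (intro exI conjI ballI)
    show "G \<in> borel_measurable borel" by simp
    show "integrable (distr N borel h) G" using Gi by (simp add: M'_def)
    fix B :: "real set" assume B[measurable]: "B \<in> sets borel"
    have "integral\<^sup>L N (\<lambda>x. indicator B (h x) * G (h x)) = integral\<^sup>L M' (\<lambda>x. indicator B x * G x)"
      unfolding M'_def by (subst integral_distr) auto
    also have "\<dots> = enn2real (\<integral>\<^sup>+ x. ennreal (indicator B x * G x) \<partial>M')"
      by (rule integral_eq_nn_integral) (auto simp: M'_def G_def)
    also have "\<dots> = enn2real (\<integral>\<^sup>+ x. ennreal (f x) * indicator B (h x) \<partial>N)"
      using eG eR[OF B] by simp
    also have "(\<integral>\<^sup>+ x. ennreal (f x) * indicator B (h x) \<partial>N) = (\<integral>\<^sup>+ x. ennreal (indicator B (h x) * f x) \<partial>N)"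
      by (intro nn_integral_cong) (auto simp: indicator_def)
    also have "enn2real \<dots> = integral\<^sup>L N (\<lambda>x. indicator B (h x) * f x)"
      by (rule integral_eq_nn_integral[symmetric]) (auto simp: nn)
    finally show "integral\<^sup>L N (\<lambda>x. indicator B (h x) * G (h x)) = integral\<^sup>L N (\<lambda>x. indicator B (h x) * f x)" .
  qed
qed



locale L5 =
  fixes X W Wp :: "real \<Rightarrow> real"
  assumes X_mono: "mono_on {0<..<1} X"
    and X_rcont: "\<forall>m \<in> {0<..<1}. continuous (at_right m) X"
    and X_L2: "set_integrable lborel {0<..<1} (\<lambda>m. (X m)\<^sup>2)"
    and W_meas: "W \<in> borel_measurable lborel"
    and W_L2: "set_integrable lborel {0<..<1} (\<lambda>m. (W m)\<^sup>2)"
    and Wp_prim: "\<forall>m \<in> {0..1}. Wp m = Wp 0 + (LINT t : {0..m} | lborel. W t)"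
begin

definition "P = restrict_space lborel {0<..<1::real}"
definition "nu = distr P borel X"

lemma Om_sets[simp]: "{0<..<1::real} \<inter> space lborel \<in> sets lborel" by simp

lemma space_P[simp]: "space P = {0<..<1}"
  by (simp add: P_def)

lemma sets_P: "sets P = sets (restrict_space borel {0<..<1})"
  unfolding P_def by (rule sets_restrict_space_cong) simp

lemma X_meas[measurable]: "X \<in> borel_measurable P"
  using borel_measurable_mono_on_fnc[OF X_mono] measurable_cong_sets[OF sets_P refl] by blast

lemma W_measP[measurable]: "W \<in> borel_measurable P"
  unfolding P_def by (rule measurable_restrict_space1) (use W_meas in simp)

lemma sets_P_sub: "A \<in> sets P \<Longrightarrow> A \<in> sets lborel"
  unfolding P_def by (metis Om_sets sets_restrict_space_iff)

lemma P_prob: "prob_space P"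
proof
  have "emeasure P {0<..<1} = emeasure lborel {0<..<1::real}"
    unfolding P_def by (rule emeasure_restrict_space) auto
  then show "emeasure P (space P) = 1" by simp
qed

interpretation P: prob_space P by (rule P_prob)

lemma nu_real_distribution: "real_distribution nu"
proof -
  interpret nu: prob_space nu unfolding nu_def by (rule P.prob_space_distr) simp
  show ?thesis by unfold_locales (simp_all add: nu_def)
qed

interpretation nu: real_distribution nu by (rule nu_real_distribution)

lemma space_nu[simp]: "space nu = UNIV" and sets_nu[simp]: "sets nu = sets borel"
  by (simp_all add: nu_def)

lemma measure_P: "A \<in> sets P \<Longrightarrow> measure P A = measure lborel A"
  using sets.sets_into_space[of A P] unfolding P_def by (intro measure_restrict_space) auto

lemma cdf_nu: "cdf nu x = gen_inv X x"
proof -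
  have "cdf nu x = measure P (X -` {..x} \<inter> space P)"
    unfolding cdf_def nu_def by (rule measure_distr) auto
  also have "\<dots> = measure lborel (X -` {..x} \<inter> space P)"
    by (rule measure_P) measurable
  also have "X -` {..x} \<inter> space P = {m \<in> {0<..<1}. X m \<le> x}" by auto
  finally show ?thesis by (simp add: gen_inv_def)
qed

lemma interval_nu: "interval_measure (gen_inv X) = nu"
proof -
  have F: "gen_inv X = cdf nu" by (simp add: cdf_nu fun_eq_iff)
  have fb: "finite_borel_measure (interval_measure (cdf nu))"
    by (rule finite_borel_measure_interval_measure[OF nu.cdf_nondecreasing nu.cdf_is_right_cont
       nu.cdf_lim_at_bot nu.cdf_lim_at_top]) (auto simp: measure_nonneg)
  have "cdf (interval_measure (cdf nu)) = cdf nu"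
    by (rule cdf_interval_measure[OF nu.cdf_nondecreasing nu.cdf_is_right_cont nu.cdf_lim_at_bot])
  then show ?thesis unfolding F
    by (intro cdf_unique'[OF fb]) (simp add: nu.finite_borel_measure_M)
qed


definition "S x = {m \<in> {0<..<1::real}. X m \<le> x}"

lemma S_P[measurable]: "S x \<in> sets P"
proof -
  have "S x = X -` {..x} \<inter> space P" by (auto simp: S_def)
  then show ?thesis using measurable_sets[OF X_meas, of "{..x}"] by simp
qed

lemma S_borel[measurable]: "S x \<in> sets borel"
  using sets_P_sub[OF S_P] by simp

lemma S_seg: "\<exists>s. 0 \<le> s \<and> s \<le> 1 \<and> {0<..<s} \<subseteq> S x \<and> S x \<subseteq> {0<..s}"
proof (cases "S x = {}")
  case True then show ?thesis by (intro exI[of _ 0]) auto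
next
  case False
  define s where "s = Sup (S x)"
  have bdd: "bdd_above (S x)" by (auto simp: S_def bdd_above_def intro!: exI[of _ 1])
  have up: "m \<le> s" if "m \<in> S x" for m using cSup_upper[OF that bdd] s_def by simp
  have s1: "s \<le> 1" unfolding s_def by (rule cSup_least[OF False]) (auto simp: S_def)
  obtain m0 where m0: "m0 \<in> S x" using False by auto
  have s0: "0 \<le> s" using up[OF m0] m0 by (auto simp: S_def)
  have "m \<in> S x" if "0 < m" "m < s" for m
  proof -
    have "m < Sup (S x)" using that s_def by simp
    then obtain m' where "m' \<in> S x" "m < m'" using less_cSup_iff[OF False bdd] by blast
    moreover have "X m \<le> X m'" using X_mono that \<open>m' \<in> S x\<close> \<open>m < m'\<close>
      unfolding mono_on_def S_def by auto
    ultimately show ?thesis using that unfolding S_def by auto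
  qed
  then show ?thesis using s0 s1 up by (intro exI[of _ s]) (auto simp: S_def)
qed

lemma gen_inv_S: "0 \<le> gen_inv X x \<and> gen_inv X x \<le> 1 \<and> {0<..<gen_inv X x} \<subseteq> S x \<and> S x \<subseteq> {0<..gen_inv X x}"
proof -
  obtain s where s: "0 \<le> s" "s \<le> 1" "{0<..<s} \<subseteq> S x" "S x \<subseteq> {0<..s}" using S_seg by blast
  have "measure lborel (S x) = measure lborel {0<..s}"
  proof (rule measure_eq_AE)
    show "AE m in lborel. (m \<in> S x) = (m \<in> {0<..s})"
      by (rule AE_I'[of "{s}"]) (use s in \<open>auto simp: subset_iff\<close>)
  qed auto
  moreover have "gen_inv X x = measure lborel (S x)" by (simp add: gen_inv_def S_def)
  ultimately have "gen_inv X x = s" using s by simp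
  then show ?thesis using s by simp
qed

lemma abs_le_sq: "\<bar>w::real\<bar> \<le> 1 + w\<^sup>2"
proof (cases "\<bar>w\<bar> \<le> 1")
  case True then show ?thesis by (simp add: add_increasing2)
next
  case False
  then have "\<bar>w\<bar> * 1 \<le> \<bar>w\<bar> * \<bar>w\<bar>" by (intro mult_left_mono) auto
  then show ?thesis by (simp add: power2_eq_square abs_mult[symmetric])
qed

lemma W_intP: "integrable P W"
proof -
  have "integrable P (\<lambda>m. (W m)\<^sup>2)"
    using W_L2 unfolding P_def set_integrable_def by (subst integrable_restrict_space) auto
  then have "integrable P (\<lambda>m. 1 + (W m)\<^sup>2)" by simp
  then show ?thesis
    by (rule Bochner_Integration.integrable_bound[OF _ W_measP]) (auto intro!: AE_I2 abs_le_sq)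
qed


lemma Wp_S: "Wp (gen_inv X x) = Wp 0 + integral\<^sup>L P (\<lambda>m. indicator (S x) m * W m)"
proof -
  define s where "s = gen_inv X x"
  have s: "0 \<le> s" "s \<le> 1" "{0<..<s} \<subseteq> S x" "S x \<subseteq> {0<..s}" using gen_inv_S s_def by auto
  have "integral\<^sup>L P (\<lambda>m. indicator (S x) m * W m)
      = integral\<^sup>L lborel (\<lambda>m. indicator {0<..<1} m *\<^sub>R (indicator (S x) m * W m))"
    unfolding P_def by (rule integral_restrict_space) simp
  also have "\<dots> = integral\<^sup>L lborel (\<lambda>t. indicator {0..s} t *\<^sub>R W t)"
  proof (rule integral_cong_AE)
    show "AE t in lborel. indicator {0<..<1} t *\<^sub>R (indicator (S x) t * W t) = indicator {0..s} t *\<^sub>R W t"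
    proof (rule AE_I'[of "{0,s}"])
      show "{t \<in> space lborel. \<not> indicator {0<..<1} t *\<^sub>R (indicator (S x) t * W t) = indicator {0..s} t *\<^sub>R W t} \<subseteq> {0, s}"
      proof (intro subsetI, rule ccontr)
        fix t assume t: "t \<in> {t \<in> space lborel. \<not> indicator {0<..<1} t *\<^sub>R (indicator (S x) t * W t) = indicator {0..s} t *\<^sub>R W t}" "t \<notin> {0, s}"
        have "t \<in> S x \<longleftrightarrow> t \<in> {0..s}" using s t(2) by (auto simp: subset_iff)
        moreover have "t \<in> S x \<Longrightarrow> t \<in> {0<..<1}" by (auto simp: S_def)
        ultimately show False using t(1) by (cases "t \<in> S x") (auto simp: indicator_def)
      qed
    qed (auto intro: finite_imp_null_set_lborel)
    show "(\<lambda>t. indicator {0<..<1} t *\<^sub>R (indicator (S x) t * W t)) \<in> borel_measurable lborel"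
      using W_meas by measurable
    show "(\<lambda>t. indicator {0..s} t *\<^sub>R W t) \<in> borel_measurable lborel"
      using W_meas by measurable
  qed
  finally have eq: "integral\<^sup>L P (\<lambda>m. indicator (S x) m * W m) = (LINT t:{0..s}|lborel. W t)"
    unfolding set_lebesgue_integral_def .
  have "s \<in> {0..1}" using s by simp
  from bspec[OF Wp_prim this] have "Wp s = Wp 0 + (LINT t:{0..s}|lborel. W t)" .
  then show ?thesis using eq unfolding s_def by simp
qed

lemma SI_int: "integrable P (\<lambda>m. indicator A m * W m)" if "A \<in> sets P"
  using integrable_real_mult_indicator[OF that W_intP] by (simp add: mult.commute)

lemma Wp_diff: "a \<le> b \<Longrightarrow> Wp (gen_inv X b) - Wp (gen_inv X a) = integral\<^sup>L P (\<lambda>m. indicator {a<..b} (X m) * W m)"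
proof -
  assume ab: "a \<le> b"
  have "integral\<^sup>L P (\<lambda>m. indicator {a<..b} (X m) * W m)
     = integral\<^sup>L P (\<lambda>m. indicator (S b) m * W m - indicator (S a) m * W m)"
  proof (intro Bochner_Integration.integral_cong refl)
    fix m assume "m \<in> space P"
    then show "indicator {a<..b} (X m) * W m = indicator (S b) m * W m - indicator (S a) m * W m"
      using ab by (auto simp: S_def indicator_def)
  qed
  also have "\<dots> = integral\<^sup>L P (\<lambda>m. indicator (S b) m * W m) - integral\<^sup>L P (\<lambda>m. indicator (S a) m * W m)"
    by (rule Bochner_Integration.integral_diff) (auto intro: SI_int)
  finally show ?thesis using Wp_S[of a] Wp_S[of b] by simp
qed

lemma nu_int: fixes g :: "real \<Rightarrow> real" assumes "g \<in> borel_measurable borel" shows "integrable nu g \<longleftrightarrow> integrable P (\<lambda>m. g (X m))"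
  unfolding nu_def by (rule integrable_distr_eq) (use assms in auto)

lemma nu_setint: fixes g :: "real \<Rightarrow> real" assumes "g \<in> borel_measurable borel" "A \<in> sets borel" shows
   "(LINT x:A|nu. g x) = integral\<^sup>L P (\<lambda>m. indicator A (X m) * g (X m))"
  unfolding nu_def set_lebesgue_integral_def using assms by (subst integral_distr) auto

lemma RN_iff: fixes g :: "real \<Rightarrow> real" shows "is_LS_RN_deriv (\<lambda>x. Wp (gen_inv X x)) (gen_inv X) g \<longleftrightarrow>
   g \<in> borel_measurable borel \<and> integrable P (\<lambda>m. g (X m)) \<and>
   (\<forall>a b. a \<le> b \<longrightarrow> integral\<^sup>L P (\<lambda>m. indicator {a<..b} (X m) * g (X m)) = integral\<^sup>L P (\<lambda>m. indicator {a<..b} (X m) * W m))"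
proof (cases "g \<in> borel_measurable borel")
  case True
  show ?thesis unfolding is_LS_RN_deriv_def interval_nu
    using True by (simp add: nu_int[OF True] nu_setint[OF True] Wp_diff)
qed (simp add: is_LS_RN_deriv_def)


lemma sets_P_iff: "A \<in> sets P \<longleftrightarrow> A \<subseteq> {0<..<1} \<and> A \<in> sets borel"
  unfolding P_def by (subst sets_restrict_space_iff) auto

definition "L c = {m \<in> {0<..<1::real}. X m = c}"
definition "J = {c. measure P (L c) \<noteq> 0}"

lemma L_P[measurable]: "L c \<in> sets P"
proof -
  have "L c = X -` {c} \<inter> space P" by (auto simp: L_def)
  then show ?thesis using measurable_sets[OF X_meas, of "{c}"] by simp
qed

lemma measure_nu_single: "measure nu {c} = measure P (L c)"
proof -
  have "measure nu {c} = measure P (X -` {c} \<inter> space P)"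
    unfolding nu_def by (rule measure_distr) auto
  also have "X -` {c} \<inter> space P = L c" by (auto simp: L_def)
  finally show ?thesis .
qed

lemma J_countable: "countable J"
  using nu.countable_support unfolding J_def measure_nu_single .

lemma J_borel[measurable]: "J \<in> sets borel"
  by (rule sets.countable[OF _ J_countable]) simp

lemma J_of_eq: assumes "0 < t" "t < m" "m < 1" "X t = X m" shows "X m \<in> J"
proof -
  have sub: "{t..m} \<subseteq> L (X m)"
  proof
    fix u assume u: "u \<in> {t..m}"
    have "X t \<le> X u" using u assms by (intro mono_onD[OF X_mono]) auto
    moreover have "X u \<le> X m" using u assms by (intro mono_onD[OF X_mono]) auto
    ultimately show "u \<in> L (X m)" using u assms by (auto simp: L_def)
  qed
  have "{t..m} \<in> sets P" using assms by (simp add: sets_P_iff subset_iff)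
  then have "measure P {t..m} = m - t" using assms by (simp add: measure_P)
  moreover have "measure P {t..m} \<le> measure P (L (X m))"
    by (rule P.finite_measure_mono[OF sub]) simp
  ultimately show ?thesis using assms by (auto simp: J_def)
qed

lemma OmegaX_J: assumes "m \<in> OmegaX X" shows "X m \<in> J"
proof -
  obtain e where e: "e > 0" "\<forall>m' \<in> ball m e. X m' = X m" and m: "0 < m" "m < 1"
    using assms by (auto simp: OmegaX_def)
  define d where "d = min (e/2) ((1-m)/2)"
  define t where "t = m + d"
  have c1: "d \<le> (1-m)/2" unfolding d_def by (rule min.cobounded2)
  have c2: "d > 0" "d \<le> e/2" using e m by (auto simp: d_def)
  have t1: "m < t" unfolding t_def using c2 by linarith
  have "2 * d \<le> 1 - m" using c1 by simp
  then have t2: "t < 1" unfolding t_def using m by linarith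
  note t = t1 t2
  have "dist m t = d" unfolding t_def dist_real_def using c2 by simp
  then have "t \<in> ball m e" using e c2 by simp
  then have Xt: "X t = X m" using e(2) by blast
  have "X t \<in> J" by (rule J_of_eq[OF m(1) t(1) t(2) Xt[symmetric]])
  then show ?thesis unfolding Xt .
qed

lemma level_part:
  assumes cJ: "c \<in> J" and v: "v * measure P (L c) = integral\<^sup>L P (\<lambda>m. indicator (L c) m * W m)"
  shows "AE m in P. X m = c \<longrightarrow> proj_HX X W m = v"
proof -
  let ?L = "L c"
  have Lsub: "?L \<subseteq> {0<..<1}" by (auto simp: L_def)
  have "measure P ?L \<noteq> 0" using cJ by (simp add: J_def)
  then have ne: "?L \<noteq> {}" by auto
  have bdd: "bdd_above ?L" "bdd_below ?L" using Lsub
    by (auto simp: bdd_above_def bdd_below_def subset_iff intro: exI[of _ 1] exI[of _ 0] less_imp_le)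
  define l where "l = Inf ?L"
  define r where "r = Sup ?L"
  have conv: "w \<in> ?L" if "u \<in> ?L" "v' \<in> ?L" "u \<le> w" "w \<le> v'" for u v' w
  proof -
    have "X u \<le> X w" using that by (intro mono_onD[OF X_mono]) (auto simp: L_def)
    moreover have "X w \<le> X v'" using that by (intro mono_onD[OF X_mono]) (auto simp: L_def)
    moreover have cu: "X u = c" "X v' = c" "0 < u" "v' < 1" using that by (auto simp: L_def)
    ultimately have "X w = c" by linarith
    then show ?thesis unfolding L_def using cu that(3,4) by simp
  qed
  have Ioo_sub: "{l<..<r} \<subseteq> ?L"
  proof
    fix w assume w: "w \<in> {l<..<r}"
    obtain u where "u \<in> ?L" "u < w" using cInf_less_iff[OF ne bdd(2)] w l_def by auto
    moreover obtain v' where "v' \<in> ?L" "w < v'" using less_cSup_iff[OF ne bdd(1)] w r_def by auto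
    ultimately show "w \<in> ?L" using conv[of u v' w] by auto
  qed
  have sub_Icc: "?L \<subseteq> {l..r}"
    using cInf_lower[OF _ bdd(2)] cSup_upper[OF _ bdd(1)] l_def r_def by auto
  have lr: "l \<le> r" using ne sub_Icc by auto
  have "measure P ?L = measure lborel ?L" by (rule measure_P) simp
  also have "\<dots> = measure lborel {l..r}"
  proof (rule measure_eq_AE)
    show "AE m in lborel. (m \<in> ?L) = (m \<in> {l..r})"
    proof (rule AE_I'[of "{l,r}"])
      show "{m \<in> space lborel. (m \<in> ?L) \<noteq> (m \<in> {l..r})} \<subseteq> {l, r}"
      proof
        fix m assume "m \<in> {m \<in> space lborel. (m \<in> ?L) \<noteq> (m \<in> {l..r})}"
        then have "m \<notin> {l<..<r}" "m \<in> {l..r}" using Ioo_sub sub_Icc by auto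
        then show "m \<in> {l, r}" by auto
      qed
    qed (auto intro: finite_imp_null_set_lborel)
    show "?L \<in> sets lborel" using sets_P_sub[OF L_P] .
  qed auto
  also have "\<dots> = r - l" using lr by simp
  finally have mL: "measure P ?L = r - l" .
  then have lr': "l < r" using \<open>measure P ?L \<noteq> 0\<close> lr by auto
  have Ioo_Om: "{l<..<r} \<subseteq> OmegaX X"
  proof
    fix m assume m: "m \<in> {l<..<r}"
    have bl: "\<forall>m' \<in> ball m (min (m - l) (r - m)). X m' = X m"
    proof
      fix m' assume "m' \<in> ball m (min (m - l) (r - m))"
      then have "dist m m' < m - l" "dist m m' < r - m" by auto
      then have "\<bar>m - m'\<bar> < m - l" "\<bar>m - m'\<bar> < r - m" unfolding dist_real_def by auto
      then have "m' \<in> {l<..<r}" by (simp add: abs_less_iff)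
      then have "m' \<in> ?L" "m \<in> ?L" using Ioo_sub m by blast+
      then have "X m' = c" "X m = c" unfolding L_def by blast+
      then show "X m' = X m" by simp
    qed
    have "m \<in> ?L" using m Ioo_sub by blast
    then have mO: "m \<in> {0<..<1}" using Lsub by blast
    have pos: "min (m - l) (r - m) > 0" using m by simp
    show "m \<in> OmegaX X" unfolding OmegaX_def using mO pos bl by blast
  qed
  have comp: "connected_component_set (OmegaX X) m = {l<..<r}" if m: "m \<in> {l<..<r}" for m
  proof
    show "{l<..<r} \<subseteq> connected_component_set (OmegaX X) m"
      using connected_component_maximal[OF m connected_Ioo Ioo_Om] .
  next
    let ?C = "connected_component_set (OmegaX X) m"
    have CO: "?C \<subseteq> OmegaX X" by (rule connected_component_subset)
    have cvx: "convex ?C"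
      using is_interval_convex_1 is_interval_connected_1 connected_connected_component by blast
    have "\<exists>k. \<forall>x\<in>?C. X x = k"
    proof (rule has_field_derivative_zero_constant[OF cvx])
      fix x assume "x \<in> ?C"
      then have "x \<in> OmegaX X" using CO by auto
      then obtain e where e: "e > 0" "\<forall>m' \<in> ball x e. X m' = X x" by (auto simp: OmegaX_def)
      have d0: "((\<lambda>_. X x) has_field_derivative 0) (at x)" by (rule DERIV_const)
      have xb: "x \<in> ball x e" using e by simp
      have eqs: "X x = X y" if "y \<in> ball x e" for y using e(2) that by metis
      have "(X has_field_derivative 0) (at x)"
        by (rule has_field_derivative_transform_within_open[OF d0 open_ball xb eqs])
      then show "(X has_field_derivative 0) (at x within ?C)"
        by (rule has_field_derivative_at_within)
    qed
    then obtain k where k: "\<forall>x\<in>?C. X x = k" by blast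
    have mC: "m \<in> ?C" using m Ioo_Om by auto
    have Xm: "X m = c" using m Ioo_sub by (auto simp: L_def)
    show "?C \<subseteq> {l<..<r}"
    proof
      fix y assume yC: "y \<in> ?C"
      then have Xy: "X y = c" using k mC Xm by auto
      have "y \<in> OmegaX X" using yC CO by auto
      then obtain e where e: "e > 0" "\<forall>m' \<in> ball y e. X m' = X y" and y: "0 < y" "y < 1"
        by (auto simp: OmegaX_def)
      define d1 where "d1 = min (e/2) (y/2)"
      define d2 where "d2 = min (e/2) ((1-y)/2)"
      have d1a: "0 < d1" "d1 \<le> e/2" using e y by (auto simp: d1_def)
      have d1b: "d1 \<le> y/2" unfolding d1_def by (rule min.cobounded2)
      have d2a: "0 < d2" "d2 \<le> e/2" using e y by (auto simp: d2_def)
      have d2b: "d2 \<le> (1-y)/2" unfolding d2_def by (rule min.cobounded2)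
      note d1 = d1a d1b and d2 = d2a d2b
      have "2 * d1 \<le> y" "2 * d2 \<le> 1 - y" using d1 d2 by simp_all
      define y1 where "y1 = y - d1"
      define y2 where "y2 = y + d2"
      have "dist y y1 = d1" "dist y y2 = d2" using d1 d2 by (simp_all add: y1_def y2_def dist_real_def)
      then have b: "y1 \<in> ball y e" "y2 \<in> ball y e" using d1 d2 e by simp_all
      have "X y1 = c" "X y2 = c" using e(2) b Xy by metis+
      moreover have "0 < y1" "y1 < 1" "0 < y2" "y2 < 1"
        using y \<open>2 * d1 \<le> y\<close> \<open>2 * d2 \<le> 1 - y\<close> d1 d2 unfolding y1_def y2_def by linarith+
      ultimately have "y1 \<in> ?L" "y2 \<in> ?L" unfolding L_def by simp_all
      then have "l \<le> y1" "y2 \<le> r" using sub_Icc by auto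
      then show "y \<in> {l<..<r}" using d1 d2 unfolding y1_def y2_def by simp
    qed
  qed
  have intL: "integral\<^sup>L P (\<lambda>m. indicator ?L m * W m) = (LINT t:{l<..<r}|lborel. W t)"
  proof -
    have "integral\<^sup>L P (\<lambda>m. indicator ?L m * W m)
        = integral\<^sup>L lborel (\<lambda>m. indicator {0<..<1} m *\<^sub>R (indicator ?L m * W m))"
      unfolding P_def by (rule integral_restrict_space) simp
    also have "\<dots> = integral\<^sup>L lborel (\<lambda>t. indicator {l<..<r} t *\<^sub>R W t)"
    proof (rule integral_cong_AE)
      have Lb[measurable]: "?L \<in> sets borel" using sets_P_sub[OF L_P] by simp
      show "(\<lambda>t. indicator {0<..<1} t *\<^sub>R (indicator ?L t * W t)) \<in> borel_measurable lborel"
        using W_meas by measurable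
      show "(\<lambda>t. indicator {l<..<r} t *\<^sub>R W t) \<in> borel_measurable lborel"
        using W_meas by measurable
      show "AE t in lborel. indicator {0<..<1} t *\<^sub>R (indicator ?L t * W t) = indicator {l<..<r} t *\<^sub>R W t"
      proof (rule AE_I'[of "{l,r}"])
        show "{t \<in> space lborel. \<not> indicator {0<..<1} t *\<^sub>R (indicator ?L t * W t) = indicator {l<..<r} t *\<^sub>R W t} \<subseteq> {l, r}"
        proof (intro subsetI, rule ccontr)
          fix t assume t: "t \<in> {t \<in> space lborel. \<not> indicator {0<..<1} t *\<^sub>R (indicator ?L t * W t) = indicator {l<..<r} t *\<^sub>R W t}" "t \<notin> {l, r}"
          have "t \<in> ?L \<longleftrightarrow> t \<in> {l<..<r}" using Ioo_sub sub_Icc t(2) by (auto simp: subset_iff)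
          moreover have "t \<in> ?L \<Longrightarrow> t \<in> {0<..<1}" using Lsub by auto
          ultimately show False using t(1) by (cases "t \<in> ?L") (auto simp: indicator_def)
        qed
      qed (auto intro: finite_imp_null_set_lborel)
    qed
    finally show ?thesis unfolding set_lebesgue_integral_def .
  qed
  have projv: "proj_HX X W m = v" if m: "m \<in> {l<..<r}" for m
  proof -
    have "m \<in> OmegaX X" using m Ioo_Om by auto
    then have "proj_HX X W m = (LINT t:{l<..<r}|lborel. W t) / measure lborel {l<..<r}"
      unfolding proj_HX_def comp[OF m] by simp
    also have "\<dots> = v"
    proof -
      have e: "(LINT t:{l<..<r}|lborel. W t) = v * (r - l)" using v intL mL by simp
      show ?thesis using lr' by (simp add: e)
    qed
    finally show ?thesis .
  qed
  have "AE m in lborel. m \<in> {0<..<1} \<longrightarrow> (X m = c \<longrightarrow> proj_HX X W m = v)"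
  proof (rule AE_I'[of "{l,r}"])
    show "{m \<in> space lborel. \<not> (m \<in> {0<..<1} \<longrightarrow> X m = c \<longrightarrow> proj_HX X W m = v)} \<subseteq> {l, r}"
    proof (intro subsetI, rule ccontr)
      fix m assume m: "m \<in> {m \<in> space lborel. \<not> (m \<in> {0<..<1} \<longrightarrow> X m = c \<longrightarrow> proj_HX X W m = v)}" "m \<notin> {l, r}"
      then have "m \<in> ?L" by (auto simp: L_def)
      then have "m \<in> {l<..<r}" using sub_Icc m(2) by auto
      then show False using projv m(1) by auto
    qed
  qed (auto intro: finite_imp_null_set_lborel)
  then show ?thesis unfolding P_def by (subst AE_restrict_space_iff) auto
qed


lemma ind_int_gen:
  fixes f h :: "real \<Rightarrow> real"
  assumes f: "integrable P f" and B: "B \<in> sets borel" and h: "h \<in> borel_measurable P"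
  shows "integrable P (\<lambda>m. indicator B (h m) * f m)"
proof (rule Bochner_Integration.integrable_bound[OF f])
  have [measurable]: "f \<in> borel_measurable P" using f by simp
  show "(\<lambda>m. indicator B (h m) * f m) \<in> borel_measurable P" using B h by measurable
  show "AE m in P. norm (indicator B (h m) * f m) \<le> norm (f m)"
    by (intro AE_I2) (auto simp: indicator_def)
qed

lemma id_meas[measurable]: "(\<lambda>m. m) \<in> borel_measurable P"
  unfolding P_def by (rule measurable_restrict_space1) simp

lemma main2:
  fixes g :: "real \<Rightarrow> real"
  assumes gm[measurable]: "g \<in> borel_measurable borel" and gi: "integrable P (\<lambda>m. g (X m))"
    and gI: "\<And>a b. a \<le> b \<Longrightarrow> integral\<^sup>L P (\<lambda>m. indicator {a<..b} (X m) * g (X m))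
                                = integral\<^sup>L P (\<lambda>m. indicator {a<..b} (X m) * W m)"
  shows "AE m in P. proj_HX X W m = g (X m)"
proof -
  define D where "D m = g (X m) - W m" for m
  have Di: "integrable P D" unfolding D_def using gi W_intP by (rule Bochner_Integration.integrable_diff)
  have Dm[measurable]: "D \<in> borel_measurable P" using Di by simp
  have split: "integral\<^sup>L P (\<lambda>m. indicator B (X m) * D m)
     = integral\<^sup>L P (\<lambda>m. indicator B (X m) * g (X m)) - integral\<^sup>L P (\<lambda>m. indicator B (X m) * W m)"
    if B: "B \<in> sets borel" for B
  proof -
    have "(\<lambda>m. indicator B (X m) * D m) = (\<lambda>m. indicator B (X m) * g (X m) - indicator B (X m) * W m)"
      by (simp add: D_def fun_eq_iff right_diff_distrib)
    then show ?thesis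
      using Bochner_Integration.integral_diff[OF ind_int_gen[OF gi B X_meas] ind_int_gen[OF W_intP B X_meas]]
      by simp
  qed
  have allA: "integral\<^sup>L P (\<lambda>m. indicator A (X m) * D m) = 0" if A: "A \<in> sets borel" for A
  proof (rule Ioc_zero_all[OF P.finite_measure_axioms Di X_meas _ A])
    fix a b :: real assume "a \<le> b"
    then show "integral\<^sup>L P (\<lambda>m. indicator {a<..b} (X m) * D m) = 0"
      using split[of "{a<..b}"] gI by simp
  qed
  define E where "E m = indicator (- J) (X m) * D m" for m
  have Ei: "integrable P E" unfolding E_def by (rule ind_int_gen[OF Di]) auto
  have Em[measurable]: "E \<in> borel_measurable P" using Ei by simp
  have iic: "integral\<^sup>L P (\<lambda>m. indicator {..t} m * E m) = 0" for t
  proof (cases "t \<le> 0")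
    case True
    have "integral\<^sup>L P (\<lambda>m. indicator {..t} m * E m) = integral\<^sup>L P (\<lambda>m. 0)"
      by (intro Bochner_Integration.integral_cong refl) (use True in \<open>auto simp: indicator_def\<close>)
    then show ?thesis by simp
  next
    case False
    show ?thesis
    proof (cases "t < 1")
      case True
      have "integral\<^sup>L P (\<lambda>m. indicator {..t} m * E m) = integral\<^sup>L P (\<lambda>m. indicator ({..X t} - J) (X m) * D m)"
      proof (intro Bochner_Integration.integral_cong refl)
        fix m assume "m \<in> space P"
        then have m: "0 < m" "m < 1" by auto
        show "indicator {..t} m * E m = indicator ({..X t} - J) (X m) * D m"
        proof (cases "m \<le> t")
          case True
          then have "X m \<le> X t" using m False \<open>t < 1\<close> by (intro mono_onD[OF X_mono]) auto
          then show ?thesis using True by (simp add: E_def indicator_def)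
        next
          case mt: False
          have "\<not> (X m \<le> X t \<and> X m \<notin> J)"
          proof
            assume a: "X m \<le> X t \<and> X m \<notin> J"
            have "X t \<le> X m" using m False \<open>t < 1\<close> mt by (intro mono_onD[OF X_mono]) auto
            then have "X t = X m" using a by simp
            have "X m \<in> J" by (rule J_of_eq[of t m]) (use m False mt \<open>X t = X m\<close> in auto)
            then show False using a by simp
          qed
          then show ?thesis using mt by (auto simp: E_def indicator_def)
        qed
      qed
      also have "\<dots> = 0" by (rule allA) simp
      finally show ?thesis .
    next
      case t1: False
      have "integral\<^sup>L P (\<lambda>m. indicator {..t} m * E m) = integral\<^sup>L P (\<lambda>m. indicator (- J) (X m) * D m)"
        by (intro Bochner_Integration.integral_cong refl) (use t1 in \<open>auto simp: E_def indicator_def\<close>)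
      also have "\<dots> = 0" by (rule allA) simp
      finally show ?thesis .
    qed
  qed
  have allB: "integral\<^sup>L P (\<lambda>m. indicator B m * E m) = 0" if B: "B \<in> sets borel" for B
  proof (rule Ioc_zero_all[OF P.finite_measure_axioms Ei id_meas _ B])
    fix a b :: real assume ab: "a \<le> b"
    have "(\<lambda>m. indicator {a<..b} m * E m) = (\<lambda>m. indicator {..b} m * E m - indicator {..a} m * E m)"
      using ab by (auto simp: fun_eq_iff indicator_def)
    then show "integral\<^sup>L P (\<lambda>m. indicator {a<..b} m * E m) = 0"
      using Bochner_Integration.integral_diff[OF ind_int_gen[OF Ei _ id_meas] ind_int_gen[OF Ei _ id_meas], of "{..b}" "{..a}"]
        iic[of a] iic[of b] by simp
  qed
  have E0: "AE m in P. E m = 0"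
  proof -
    define Bp where "Bp = {m \<in> space P. 0 < E m}"
    define Bn where "Bn = {m \<in> space P. E m < 0}"
    have "Bp \<in> sets P" unfolding Bp_def by measurable
    from sets_P_sub[OF this] have Bp: "Bp \<in> sets borel" by simp
    have "Bn \<in> sets P" unfolding Bn_def by measurable
    from sets_P_sub[OF this] have Bn: "Bn \<in> sets borel" by simp
    have ip: "integrable P (\<lambda>m. indicator Bp m * E m)" by (rule ind_int_gen[OF Ei Bp id_meas])
    have "AE m in P. indicator Bp m * E m = 0"
      using integral_nonneg_eq_0_iff_AE[OF ip] allB[OF Bp] by (auto simp: Bp_def indicator_def intro!: AE_I2)
    moreover
    have "integrable P (\<lambda>m. - (indicator Bn m * E m))" using ind_int_gen[OF Ei Bn id_meas] by simp
    then have "AE m in P. - (indicator Bn m * E m) = 0"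
      using integral_nonneg_eq_0_iff_AE[of P "\<lambda>m. - (indicator Bn m * E m)"] allB[OF Bn]
      by (auto simp: Bn_def indicator_def intro!: AE_I2)
    moreover have "AE m in P. m \<in> space P" by (rule AE_space)
    ultimately show ?thesis
      by eventually_elim (auto simp: Bp_def Bn_def indicator_def split: if_splits)
  qed
  have partZ: "AE m in P. X m \<notin> J \<longrightarrow> proj_HX X W m = g (X m)"
    using E0
  proof eventually_elim
    case (elim m)
    show ?case
    proof
      assume nJ: "X m \<notin> J"
      then have "D m = 0" using elim by (simp add: E_def)
      moreover have "m \<notin> OmegaX X" using OmegaX_J nJ by blast
      ultimately show "proj_HX X W m = g (X m)" by (simp add: proj_HX_def D_def)
    qed
  qed
  have partJ: "AE m in P. X m = c \<longrightarrow> proj_HX X W m = g c" if cJ: "c \<in> J" for c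
  proof (rule level_part[OF cJ])
    have "0 = integral\<^sup>L P (\<lambda>m. indicator {c} (X m) * D m)" by (rule allA[symmetric]) simp
    also have "\<dots> = integral\<^sup>L P (\<lambda>m. g c * indicator (L c) m - indicator (L c) m * W m)"
      by (intro Bochner_Integration.integral_cong refl) (auto simp: L_def D_def indicator_def)
    also have "\<dots> = integral\<^sup>L P (\<lambda>m. g c * indicator (L c) m) - integral\<^sup>L P (\<lambda>m. indicator (L c) m * W m)"
    proof (rule Bochner_Integration.integral_diff)
      show "integrable P (\<lambda>m. g c * indicator (L c) m)"
        by (intro integrable_mult_right integrable_real_indicator L_P) (simp add: less_top[symmetric])
      show "integrable P (\<lambda>m. indicator (L c) m * W m)" by (rule SI_int[OF L_P])
    qed
    also have "integral\<^sup>L P (\<lambda>m. g c * indicator (L c) m) = g c * measure P (L c)"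
    proof -
      have "L c \<inter> {0<..<1} = L c" by (auto simp: L_def)
      then show ?thesis by simp
    qed
    finally show "g c * measure P (L c) = integral\<^sup>L P (\<lambda>m. indicator (L c) m * W m)" by simp
  qed
  have "AE m in P. \<forall>c\<in>J. X m = c \<longrightarrow> proj_HX X W m = g c"
    using partJ by (subst AE_ball_countable[OF J_countable]) auto
  with partZ show ?thesis
    by eventually_elim auto
qed


lemma ex_g: "\<exists>g. is_LS_RN_deriv (\<lambda>x. Wp (gen_inv X x)) (gen_inv X) g"
proof -
  have f1i: "integrable P (\<lambda>m. max (W m) 0)" using W_intP by (intro integrable_max) simp_all
  have f2i: "integrable P (\<lambda>m. max (- W m) 0)" using W_intP by (intro integrable_max) simp_all
  have "\<exists>G. G \<in> borel_measurable borel \<and> integrable (distr P borel X) G \<and>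
    (\<forall>B\<in>sets borel. integral\<^sup>L P (\<lambda>x. indicator B (X x) * G (X x)) = integral\<^sup>L P (\<lambda>x. indicator B (X x) * max (W x) 0))"
    by (rule RN_pos[OF P.finite_measure_axioms f1i X_meas]) simp
  then obtain G1 where G1m[measurable]: "G1 \<in> borel_measurable borel" and G1i: "integrable nu G1"
    and G1: "\<And>B. B \<in> sets borel \<Longrightarrow> integral\<^sup>L P (\<lambda>x. indicator B (X x) * G1 (X x)) = integral\<^sup>L P (\<lambda>x. indicator B (X x) * max (W x) 0)"
    unfolding nu_def by blast
  have "\<exists>G. G \<in> borel_measurable borel \<and> integrable (distr P borel X) G \<and>
    (\<forall>B\<in>sets borel. integral\<^sup>L P (\<lambda>x. indicator B (X x) * G (X x)) = integral\<^sup>L P (\<lambda>x. indicator B (X x) * max (- W x) 0))"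
    by (rule RN_pos[OF P.finite_measure_axioms f2i X_meas]) simp
  then obtain G2 where G2m[measurable]: "G2 \<in> borel_measurable borel" and G2i: "integrable nu G2"
    and G2: "\<And>B. B \<in> sets borel \<Longrightarrow> integral\<^sup>L P (\<lambda>x. indicator B (X x) * G2 (X x)) = integral\<^sup>L P (\<lambda>x. indicator B (X x) * max (- W x) 0)"
    unfolding nu_def by blast
  have G1P: "integrable P (\<lambda>m. G1 (X m))" using G1i nu_int[OF G1m] by simp
  have G2P: "integrable P (\<lambda>m. G2 (X m))" using G2i nu_int[OF G2m] by simp
  define g where "g x = G1 x - G2 x" for x
  show ?thesis
  proof (intro exI[of _ g], unfold RN_iff, intro conjI allI impI)
    show "g \<in> borel_measurable borel" unfolding g_def by measurable
    show "integrable P (\<lambda>m. g (X m))" unfolding g_def using G1P G2P by (rule Bochner_Integration.integrable_diff)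
    fix a b :: real assume "a \<le> b"
    let ?B = "{a<..b}"
    have B: "?B \<in> sets borel" by simp
    have "integral\<^sup>L P (\<lambda>m. indicator ?B (X m) * g (X m))
        = integral\<^sup>L P (\<lambda>m. indicator ?B (X m) * G1 (X m) - indicator ?B (X m) * G2 (X m))"
      by (simp add: g_def right_diff_distrib)
    also have "\<dots> = integral\<^sup>L P (\<lambda>m. indicator ?B (X m) * G1 (X m)) - integral\<^sup>L P (\<lambda>m. indicator ?B (X m) * G2 (X m))"
      by (rule Bochner_Integration.integral_diff[OF ind_int_gen[OF G1P B X_meas] ind_int_gen[OF G2P B X_meas]])
    also have "\<dots> = integral\<^sup>L P (\<lambda>m. indicator ?B (X m) * max (W m) 0) - integral\<^sup>L P (\<lambda>m. indicator ?B (X m) * max (- W m) 0)"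
      using G1[OF B] G2[OF B] by simp
    also have "\<dots> = integral\<^sup>L P (\<lambda>m. indicator ?B (X m) * max (W m) 0 - indicator ?B (X m) * max (- W m) 0)"
      by (rule Bochner_Integration.integral_diff[OF ind_int_gen[OF f1i B X_meas] ind_int_gen[OF f2i B X_meas], symmetric])
    also have "\<dots> = integral\<^sup>L P (\<lambda>m. indicator ?B (X m) * W m)"
      by (intro Bochner_Integration.integral_cong refl) (auto simp: indicator_def max_def)
    finally show "integral\<^sup>L P (\<lambda>m. indicator ?B (X m) * g (X m)) = integral\<^sup>L P (\<lambda>m. indicator ?B (X m) * W m)" .
  qed
qed

end

theorem lemma5p1:
  fixes X W Wp :: "real \<Rightarrow> real"
  assumes X_mono: "mono_on {0<..<1} X"
    and X_rcont: "\<forall>m \<in> {0<..<1}. continuous (at_right m) X"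
    and X_L2: "set_integrable lborel {0<..<1} (\<lambda>m. (X m)\<^sup>2)"
    and W_meas: "W \<in> borel_measurable lborel"
    and W_L2: "set_integrable lborel {0<..<1} (\<lambda>m. (W m)\<^sup>2)"
    and Wp_prim: "\<forall>m \<in> {0..1}. Wp m = Wp 0 + (LINT t : {0..m} | lborel. W t)"
  shows "(\<exists>g. is_LS_RN_deriv (\<lambda>x. Wp (gen_inv X x)) (gen_inv X) g)
    \<and> (\<forall>g. is_LS_RN_deriv (\<lambda>x. Wp (gen_inv X x)) (gen_inv X) g \<longrightarrow>
          (AE m in lborel. m \<in> {0<..<1} \<longrightarrow> proj_HX X W m = g (X m)))"
proof -
  interpret L5 X W Wp using assms by unfold_locales
  show ?thesis
  proof (intro conjI allI impI)
    show "\<exists>g. is_LS_RN_deriv (\<lambda>x. Wp (gen_inv X x)) (gen_inv X) g" by (rule ex_g)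
    fix g assume "is_LS_RN_deriv (\<lambda>x. Wp (gen_inv X x)) (gen_inv X) g"
    then have g: "g \<in> borel_measurable borel" "integrable P (\<lambda>m. g (X m))"
      "\<And>a b. a \<le> b \<Longrightarrow> integral\<^sup>L P (\<lambda>m. indicator {a<..b} (X m) * g (X m)) = integral\<^sup>L P (\<lambda>m. indicator {a<..b} (X m) * W m)"
      unfolding RN_iff by auto
    have "AE m in P. proj_HX X W m = g (X m)" by (rule main2[OF g])
    then show "AE m in lborel. m \<in> {0<..<1} \<longrightarrow> proj_HX X W m = g (X m)"
      unfolding P_def by (subst (asm) AE_restrict_space_iff) auto
  qed
qed

end
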